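(* Let $n\ge 5$ and $x\in S_n$. Then $x\in\mathrm{Sort}_n(123,321)$ if and only if $\mathrm{inc}_{n+1}(x)\in\mathrm{Sort}_{n+1}(123,321)$.
   Context: For $x=x_1\cdots x_n\in S_n$, $\mathrm{inc}_{n+1}(x)=(x_1+1)(x_2+1)\cdots(x_n+1)\,1\in S_{n+1}$ (insert $1$ at the end and increase all other entries by one). A permutation contains a pattern $p$ if it has a subsequence order-isomorphic to $p$; otherwise it avoids $p$. For a set $T$ of patterns, the map $s_T$ is defined as follows: the entries of the input permutation are read from left to right, with an initially empty stack. At each step, if the input is nonempty and pushing the next input entry onto the stack produces a stack whose contents, read from top to bottom, avoid every pattern in $T$, that entry is pushed; otherwise the top entry of the stack is popped and appended to the output. When the input is exhausted, the remaining stack entries are popped one at a time to the output. Write $s_{\sigma,\tau}=s_{\{\sigma,\tau\}}$ and $s=s_{\{21\}}$ (West's stack-sorting map). $\mathrm{Sort}_n(\sigma,\tau)$ is the set of $x\in S_n$ with $s(s_{\sigma,\tau}(x))=12\cdots n$. *)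

theory Defs
  imports Main "HOL-Library.Sublist"
begin

definition perms :: "nat \<Rightarrow> nat list set" where
  "perms n = {x. distinct x \<and> set x = {1..n}}"

definition order_iso :: "nat list \<Rightarrow> nat list \<Rightarrow> bool" where
  "order_iso ys p \<longleftrightarrow> length ys = length p \<and>
     (\<forall>i<length p. \<forall>j<length p. (ys ! i < ys ! j \<longleftrightarrow> p ! i < p ! j))"

definition contains :: "nat list \<Rightarrow> nat list \<Rightarrow> bool" where
  "contains w p \<longleftrightarrow> (\<exists>ys. subseq ys w \<and> order_iso ys p)"

definition avoids_all :: "nat list set \<Rightarrow> nat list \<Rightarrow> bool" where
  "avoids_all T w \<longleftrightarrow> (\<forall>p\<in>T. \<not> contains w p)"

text \<open>The stack is a list whose head is the top,
  so the list itself is the stack contents read from top to bottom.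
  (The case of an empty stack with a forbidden push never arises when T has only
  patterns of length at least 2; we push in that case to keep the map total.)\<close>

function stack_run :: "nat list set \<Rightarrow> nat list \<Rightarrow> nat list \<Rightarrow> nat list" where
  "stack_run T [] st = st"
| "stack_run T (a # inp) st =
     (if avoids_all T (a # st) \<or> st = [] then stack_run T inp (a # st)
      else hd st # stack_run T (a # inp) (tl st))"
  by pat_completeness auto
termination
  by (relation "measure (\<lambda>(T, inp, st). 2 * length inp + length st)") auto

definition s_T :: "nat list set \<Rightarrow> nat list \<Rightarrow> nat list" where
  "s_T T x = stack_run T x []"

definition west_s :: "nat list \<Rightarrow> nat list" where
  "west_s x = s_T {[2,1]} x"

definition Sort2 :: "nat \<Rightarrow> nat list \<Rightarrow> nat list \<Rightarrow> nat list set" where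
  "Sort2 n \<sigma> \<tau> = {x \<in> perms n. west_s (s_T {\<sigma>, \<tau>} x) = [1..<n+1]}"

definition inc :: "nat list \<Rightarrow> nat list" where
  "inc x = map Suc x @ [1]"

end

theory Submission
  imports Defs
begin


lemma subseq_Cons_right:
  "subseq xs (y#ys) \<longleftrightarrow> subseq xs ys \<or> (\<exists>xs'. xs = y#xs' \<and> subseq xs' ys)"
  by (cases xs) (auto dest: subseq_Cons')

lemma contains3:
  assumes "length p = 3"
  shows "contains w p \<longleftrightarrow> (\<exists>a b c. subseq [a,b,c] w \<and> order_iso [a,b,c] p)"
proof
  assume "contains w p"
  then obtain ys where "subseq ys w" "order_iso ys p" unfolding contains_def by blast
  then have "length ys = 3" using assms by (simp add: order_iso_def)
  then obtain a b c where "ys = [a,b,c]" by (auto simp: numeral_3_eq_3 length_Suc_conv)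
  then show "\<exists>a b c. subseq [a,b,c] w \<and> order_iso [a,b,c] p"
    using \<open>subseq ys w\<close> \<open>order_iso ys p\<close> by blast
qed (auto simp: contains_def)

lemma contains2:
  assumes "length p = 2"
  shows "contains w p \<longleftrightarrow> (\<exists>a b. subseq [a,b] w \<and> order_iso [a,b] p)"
proof
  assume "contains w p"
  then obtain ys where "subseq ys w" "order_iso ys p" unfolding contains_def by blast
  then have "length ys = 2" using assms by (simp add: order_iso_def)
  then obtain a b where "ys = [a,b]" by (auto simp: numeral_2_eq_2 length_Suc_conv)
  then show "\<exists>a b. subseq [a,b] w \<and> order_iso [a,b] p"
    using \<open>subseq ys w\<close> \<open>order_iso ys p\<close> by blast
qed (auto simp: contains_def)

lemma oi123: "order_iso [a,b,c] [1,2,3] \<longleftrightarrow> a<b \<and> b<c"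
  by (auto simp: order_iso_def numeral_3_eq_3 All_less_Suc2)

lemma oi321: "order_iso [a,b,c] [3,2,1] \<longleftrightarrow> a>b \<and> b>c"
  by (auto simp: order_iso_def numeral_3_eq_3 All_less_Suc2)

lemma oi21: "order_iso [a,b] [2,1] \<longleftrightarrow> a>b"
  by (auto simp: order_iso_def numeral_2_eq_2 All_less_Suc2)

lemma c123: "contains w [1,2,3] \<longleftrightarrow> (\<exists>a b c. subseq [a,b,c] w \<and> a<b \<and> b<c)"
  proof -
  have "contains w [1,2,3] = (\<exists>a b c. subseq [a,b,c] w \<and> order_iso [a,b,c] [1,2,3])"
    by (rule contains3) simp
  then show ?thesis by (simp only: oi123)
qed
lemma c321: "contains w [3,2,1] \<longleftrightarrow> (\<exists>a b c. subseq [a,b,c] w \<and> a>b \<and> b>c)"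
  proof -
  have "contains w [3,2,1] = (\<exists>a b c. subseq [a,b,c] w \<and> order_iso [a,b,c] [3,2,1])"
    by (rule contains3) simp
  then show ?thesis by (simp only: oi321)
qed
lemma c21: "contains w [2,1] \<longleftrightarrow> (\<exists>a b. subseq [a,b] w \<and> a>b)"
  proof -
  have "contains w [2,1] = (\<exists>a b. subseq [a,b] w \<and> order_iso [a,b] [2,1])"
    by (rule contains2) simp
  then show ?thesis by (simp only: oi21)
qed

lemma avT: "avoids_all {[1,2,3],[3,2,1]} w \<longleftrightarrow>
   (\<nexists>a b c. subseq [a,b,c] w \<and> a<b \<and> b<c) \<and> (\<nexists>a b c. subseq [a,b,c] w \<and> a>b \<and> b>c)"
  unfolding avoids_all_def c123[symmetric] c321[symmetric] by auto

lemma avW: "avoids_all {[2,1]} w \<longleftrightarrow> (\<nexists>a b. subseq [a,b] w \<and> a>b)"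
  unfolding avoids_all_def c21[symmetric] by auto

definition has231 :: "nat list \<Rightarrow> bool" where
  "has231 w \<longleftrightarrow> (\<exists>a b c. subseq [a,b,c] w \<and> c<a \<and> a<b)"

lemma sorted_wrt_subseq2:
  "sorted_wrt R xs \<longleftrightarrow> (\<forall>u v. subseq [u,v] xs \<longrightarrow> R u v)"
proof (induction xs)
  case (Cons x xs)
  show ?case
    apply (simp add: Cons subseq_Cons_right subseq_singleton_left)
    by blast
qed simp

lemma sorted_wrt_subseq:
  "subseq ys xs \<Longrightarrow> sorted_wrt R xs \<Longrightarrow> sorted_wrt R ys"
proof (induction rule: list_emb.induct)
  case (list_emb_Cons2 x y xs ys)
  then show ?case by (auto elim: list_emb_set)
qed auto

lemma distinct_subseq:
  "subseq ys xs \<Longrightarrow> distinct xs \<Longrightarrow> distinct ys"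
proof (induction rule: list_emb.induct)
  case (list_emb_Cons2 x y xs ys)
  then show ?case by (auto elim: list_emb_set)
qed auto

lemma has231_mono: "subseq u w \<Longrightarrow> has231 u \<Longrightarrow> has231 w"
  unfolding has231_def by (meson subseq_order.order_trans)


lemma subseq_set: "subseq xs ys \<Longrightarrow> set xs \<subseteq> set ys"
  by (induction rule: list_emb.induct) auto
lemma subseq_Cons_self: "subseq xs (x # xs)"
  by (rule list_emb_Cons) (rule subseq_order.refl)

definition TT :: "nat list set" where "TT = {[1,2,3],[3,2,1]}"

lemma avTT: "avoids_all TT w \<longleftrightarrow>
   (\<nexists>a b c. subseq [a,b,c] w \<and> a<b \<and> b<c) \<and> (\<nexists>a b c. subseq [a,b,c] w \<and> a>b \<and> b>c)"
  unfolding TT_def by (rule avT)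

lemma contains_mono: "subseq u w \<Longrightarrow> contains u p \<Longrightarrow> contains w p"
  unfolding contains_def by (meson subseq_order.order_trans)

lemma avoids_mono: "subseq u w \<Longrightarrow> avoids_all T w \<Longrightarrow> avoids_all T u"
  unfolding avoids_all_def using contains_mono by blast

lemma short_avoids: "length w \<le> 2 \<Longrightarrow> avoids_all TT w"
  unfolding avTT using list_emb_length by fastforce

function run :: "nat list set \<Rightarrow> nat list \<Rightarrow> nat list \<Rightarrow> nat list \<times> nat list" where
  "run T [] st = ([], st)"
| "run T (a # inp) st =
     (if avoids_all T (a # st) \<or> st = [] then run T inp (a # st)
      else (hd st # fst (run T (a # inp) (tl st)), snd (run T (a # inp) (tl st))))"
  by pat_completeness auto
termination
  by (relation "measure (\<lambda>(T, inp, st). 2 * length inp + length st)") auto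

declare stack_run.simps(2)[simp del] run.simps(2)[simp del]

lemma sr_push: "avoids_all T (a # st) \<or> st = [] \<Longrightarrow> stack_run T (a # inp) st = stack_run T inp (a # st)"
  by (rule trans[OF stack_run.simps(2)]) simp

lemma sr_pop: "\<not> avoids_all T (a # b # st) \<Longrightarrow> stack_run T (a # inp) (b # st) = b # stack_run T (a # inp) st"
  by (rule trans[OF stack_run.simps(2)]) simp

lemma run_push: "avoids_all T (a # st) \<or> st = [] \<Longrightarrow> run T (a # inp) st = run T inp (a # st)"
  by (rule trans[OF run.simps(2)]) simp

lemma run_pop: "\<not> avoids_all T (a # b # st) \<Longrightarrow>
    run T (a # inp) (b # st) = (b # fst (run T (a # inp) st), snd (run T (a # inp) st))"
  by (rule trans[OF run.simps(2)]) simp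

lemma run_split:
  "stack_run T (inp @ more) st = fst (run T inp st) @ stack_run T more (snd (run T inp st))"
proof (induction T inp st rule: run.induct)
  case (2 T a inp st)
  show ?case
  proof (cases "avoids_all T (a # st) \<or> st = []")
    case True
    then show ?thesis using "2.IH"(1)[OF True] by (simp add: sr_push run_push)
  next
    case False
    then obtain b st' where st: "st = b # st'" by (cases st) auto
    have na: "\<not> avoids_all T (a # b # st')" using False st by simp
    show ?thesis using "2.IH"(2)[OF False] st na by (simp add: sr_pop run_pop)
  qed
qed simp

lemma stack_run_run: "stack_run T inp st = fst (run T inp st) @ snd (run T inp st)"
  using run_split[of T inp "[]" st] by simp

lemma run_inv: "avoids_all T st \<Longrightarrow> T = TT \<Longrightarrow> avoids_all T (snd (run T inp st))"
proof (induction T inp st rule: run.induct)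
  case (2 T a inp st)
  have TT: "T = TT" using 2 by simp
  show ?case
  proof (cases "avoids_all T (a # st) \<or> st = []")
    case True
    then have "avoids_all T (a # st)" using "2.prems" short_avoids TT by auto
    then show ?thesis using "2.IH"(1)[OF True] True TT by (simp add: run_push)
  next
    case False
    then obtain b st' where st: "st = b # st'" by (cases st) auto
    have na: "\<not> avoids_all T (a # b # st')" using False st by simp
    have "subseq st' st" using st subseq_Cons_self by simp
    then have "avoids_all T st'" using "2.prems" avoids_mono by blast
    then show ?thesis using "2.IH"(2)[OF False] st na TT by (simp add: run_pop)
  qed
qed simp

lemma set_stack_run: "set (stack_run T inp st) = set inp \<union> set st"
proof (induction T inp st rule: stack_run.induct)
  case (2 T a inp st)
  show ?case
  proof (cases "avoids_all T (a # st) \<or> st = []")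
    case True then show ?thesis using "2.IH"(1)[OF True] by (simp add: sr_push)
  next
    case False
    then obtain b st' where st: "st = b # st'" by (cases st) auto
    have na: "\<not> avoids_all T (a # b # st')" using False st by simp
    show ?thesis using "2.IH"(2)[OF False] st na by (auto simp: sr_pop)
  qed
qed simp

lemma length_stack_run: "length (stack_run T inp st) = length inp + length st"
proof (induction T inp st rule: stack_run.induct)
  case (2 T a inp st)
  show ?case
  proof (cases "avoids_all T (a # st) \<or> st = []")
    case True then show ?thesis using "2.IH"(1)[OF True] by (simp add: sr_push)
  next
    case False
    then obtain b st' where st: "st = b # st'" by (cases st) auto
    have na: "\<not> avoids_all T (a # b # st')" using False st by simp
    show ?thesis using "2.IH"(2)[OF False] st na by (simp add: sr_pop)
  qed
qed simp

lemma subseq_stack_run: "subseq st (stack_run T inp st)"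
proof (induction T inp st rule: stack_run.induct)
  case (2 T a inp st)
  show ?case
  proof (cases "avoids_all T (a # st) \<or> st = []")
    case True
    then have "subseq (a#st) (stack_run T inp (a#st))" using "2.IH"(1) by blast
    then have "subseq st (stack_run T inp (a#st))" by (rule subseq_Cons')
    then show ?thesis using True by (simp add: sr_push)
  next
    case False
    then obtain b st' where st: "st = b # st'" by (cases st) auto
    have na: "\<not> avoids_all T (a # b # st')" using False st by simp
    have "subseq st' (stack_run T (a#inp) st')" using "2.IH"(2)[OF False] st by simp
    then show ?thesis using na st by (simp add: sr_pop)
  qed
qed simp

lemma subseq_map_inj:
  assumes "inj f" shows "subseq ys (map f w) \<Longrightarrow> \<exists>zs. ys = map f zs \<and> subseq zs w"
proof (induction w arbitrary: ys)
  case Nil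
  then have "subseq ys []" by simp
  then have "ys = []" by (rule list_emb_Nil2)
  then show ?case by auto
next
  case (Cons x w)
  from Cons.prems have "subseq ys (map f w) \<or> (\<exists>ys'. ys = f x # ys' \<and> subseq ys' (map f w))"
    by (simp add: subseq_Cons_right)
  then show ?case
  proof
    assume "subseq ys (map f w)"
    then obtain zs where "ys = map f zs" "subseq zs w" using Cons.IH by blast
    moreover have "subseq zs (x # w)" using \<open>subseq zs w\<close> by (rule list_emb_Cons)
    ultimately show ?thesis by blast
  next
    assume "\<exists>ys'. ys = f x # ys' \<and> subseq ys' (map f w)"
    then obtain ys' where "ys = f x # ys'" "subseq ys' (map f w)" by blast
    moreover obtain zs' where "ys' = map f zs'" "subseq zs' w" using Cons.IH[of ys'] \<open>subseq ys' (map f w)\<close> by blast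
    ultimately have "ys = map f (x # zs')" "subseq (x # zs') (x # w)" by auto
    then show ?thesis by blast
  qed
qed

lemma order_iso_Suc: "order_iso (map Suc zs) p = order_iso zs p"
  unfolding order_iso_def by auto

lemma contains_Suc: "contains (map Suc w) p = contains w p"
proof
  assume "contains (map Suc w) p"
  then obtain ys where "subseq ys (map Suc w)" "order_iso ys p" unfolding contains_def by blast
  then have "\<exists>zs. ys = map Suc zs \<and> subseq zs w" using subseq_map_inj[OF inj_Suc] by blast
  then obtain zs where "ys = map Suc zs" "subseq zs w" by blast
  then show "contains w p" using \<open>order_iso ys p\<close> order_iso_Suc unfolding contains_def by auto
next
  assume "contains w p"
  then obtain ys where "subseq ys w" "order_iso ys p" unfolding contains_def by blast
  then show "contains (map Suc w) p" unfolding contains_def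
    using subseq_map[of ys w Suc] order_iso_Suc by blast
qed

lemma avoids_Suc: "avoids_all T (map Suc w) = avoids_all T w"
  unfolding avoids_all_def using contains_Suc by blast

lemma run_shift:
  "run T (map Suc inp) (map Suc st) = (map Suc (fst (run T inp st)), map Suc (snd (run T inp st)))"
proof (induction T inp st rule: run.induct)
  case (2 T a inp st)
  have e: "avoids_all T (Suc a # map Suc st) = avoids_all T (a # st)"
    using avoids_Suc[of T "a # st"] by simp
  show ?case
  proof (cases "avoids_all T (a # st) \<or> st = []")
    case True
    then have c: "avoids_all T (Suc a # map Suc st) \<or> map Suc st = []" using e by simp
    show ?thesis using "2.IH"(1)[OF True] True
      by (simp add: run_push[OF c] run_push[OF True])
  next
    case False
    then obtain b st' where st: "st = b # st'" by (cases st) auto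
    have na: "\<not> avoids_all T (a # b # st')" using False st by simp
    have na': "\<not> avoids_all T (Suc a # Suc b # map Suc st')"
      using na avoids_Suc[of T "a # b # st'"] by simp
    show ?thesis using "2.IH"(2)[OF False] st
      by (simp add: run_pop[OF na] run_pop[OF na'])
  qed
qed simp


lemma av_min:
  assumes "avoids_all TT st" "distinct st" "\<forall>z\<in>set st. m < z"
  shows "avoids_all TT (m # st) \<longleftrightarrow> sorted_wrt (>) st"
proof
  assume a: "avoids_all TT (m # st)"
  show "sorted_wrt (>) st"
    unfolding sorted_wrt_subseq2
  proof (intro allI impI)
    fix u v assume uv: "subseq [u,v] st"
    then have "distinct [u,v]" using distinct_subseq assms(2) by blast
    moreover have "u \<in> set st" using uv using subseq_set by fastforce
    moreover have "\<not> (m < u \<and> u < v)"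
    proof -
      have "subseq [m,u,v] (m # st)" using uv by simp
      then show ?thesis using a unfolding avTT by blast
    qed
    ultimately show "u > v" using assms(3) by auto
  qed
next
  assume s: "sorted_wrt (>) st"
  show "avoids_all TT (m # st)"
    unfolding avTT
  proof (intro conjI notI)
    assume "\<exists>a b c. subseq [a, b, c] (m # st) \<and> a < b \<and> b < c"
    then obtain a b c where abc: "subseq [a,b,c] (m # st)" "a<b" "b<c" by blast
    show False
    proof (cases "subseq [a,b,c] st")
      case True then show ?thesis using assms(1) abc unfolding avTT by blast
    next
      case False
      then have "subseq [b,c] st" using abc(1) by (auto simp: subseq_Cons_right)
      then show ?thesis using s abc unfolding sorted_wrt_subseq2 by force
    qed
  next
    assume "\<exists>a b c. subseq [a, b, c] (m # st) \<and> a > b \<and> b > c"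
    then obtain a b c where abc: "subseq [a,b,c] (m # st)" "a>b" "b>c" by blast
    show False
    proof (cases "subseq [a,b,c] st")
      case True then show ?thesis using assms(1) abc unfolding avTT by blast
    next
      case False
      then have "a = m" "subseq [b,c] st" using abc(1) by (auto simp: subseq_Cons_right)
      then have "b \<in> set st" using subseq_set by fastforce
      then show ?thesis using assms(3) abc \<open>a = m\<close> by auto
    qed
  qed
qed

lemma final_phase:
  "avoids_all TT st \<Longrightarrow> distinct st \<Longrightarrow> \<forall>z\<in>set st. m < z \<Longrightarrow>
   \<exists>S1 S2. st = S1 @ S2 \<and> stack_run TT [m] st = S1 @ m # S2 \<and> sorted_wrt (>) S2 \<and>
     (\<forall>A l. S1 = A @ [l] \<longrightarrow> \<not> sorted_wrt (>) (l # S2))"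
proof (induction st)
  case Nil
  have "avoids_all TT [m]" using short_avoids[of "[m]"] by simp
  then have "stack_run TT [m] [] = [m]" by (simp add: sr_push)
  then show ?case by (intro exI[of _ "[]"]) simp
next
  case (Cons b st)
  show ?case
  proof (cases "sorted_wrt (>) (b # st)")
    case True
    then have "avoids_all TT (m # b # st)" using av_min Cons.prems by blast
    then have "stack_run TT [m] (b # st) = m # b # st" by (simp add: sr_push)
    then show ?thesis using True
      apply (rule_tac x="[]" in exI)
      apply (rule_tac x="b # st" in exI)
      by auto
  next
    case False
    then have na: "\<not> avoids_all TT (m # b # st)" using av_min Cons.prems by blast
    have "avoids_all TT st" using Cons.prems(1) avoids_mono[of st "b # st"] by auto
    then obtain S1 S2 where S: "st = S1 @ S2" "stack_run TT [m] st = S1 @ m # S2"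
       "sorted_wrt (>) S2" "\<forall>A l. S1 = A @ [l] \<longrightarrow> \<not> sorted_wrt (>) (l # S2)"
      using Cons by auto
    have r: "stack_run TT [m] (b # st) = b # S1 @ m # S2" using na S(2) by (simp add: sr_pop)
    have cond: "\<forall>A l. b # S1 = A @ [l] \<longrightarrow> \<not> sorted_wrt (>) (l # S2)"
    proof (intro allI impI)
      fix A l assume "b # S1 = A @ [l]"
      then show "\<not> sorted_wrt (>) (l # S2)"
      proof (cases A)
        case Nil
        then show ?thesis using \<open>b # S1 = A @ [l]\<close> False S(1) by auto
      next
        case (Cons a A')
        then show ?thesis using \<open>b # S1 = A @ [l]\<close> S(4) by auto
      qed
    qed
    show ?thesis
      apply (rule exI[of _ "b # S1"])
      apply (rule exI[of _ S2])
      using S r cond by auto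
  qed
qed


lemma popped_min:
  "distinct (inp @ st) \<Longrightarrow> avoids_all T st \<Longrightarrow> m \<in> set (fst (run T inp st)) \<Longrightarrow>
   \<forall>z\<in>set (inp @ st). m \<le> z \<Longrightarrow> T = TT \<Longrightarrow> has231 (stack_run T inp st)"
proof (induction T inp st rule: run.induct)
  case (1 T st)
  then show ?case by simp
next
  case (2 T a inp st)
  have TT: "T = TT" using "2.prems" by simp
  show ?case
  proof (cases "avoids_all T (a # st) \<or> st = []")
    case True
    then have "avoids_all T (a # st)" using "2.prems" short_avoids TT by auto
    have h: "has231 (stack_run T inp (a # st))"
      apply (rule "2.IH"(1)[OF True])
      using "2.prems" \<open>avoids_all T (a # st)\<close> TT True by (auto simp: run_push)
    then show ?thesis using True by (simp add: sr_push)
  next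
    case False
    then obtain b st' where st: "st = b # st'" by (cases st) auto
    have na: "\<not> avoids_all T (a # b # st')" using False st by simp
    have out: "stack_run T (a # inp) st = b # stack_run T (a # inp) st'" using na st by (simp add: sr_pop)
    have av': "avoids_all T st'" using "2.prems"(2) st avoids_mono[of st' "b # st'"] by auto
    have mem: "m = b \<or> m \<in> set (fst (run T (a # inp) st'))" using "2.prems"(3) na st by (simp add: run_pop)
    then show ?thesis
    proof
      assume "m \<in> set (fst (run T (a # inp) st'))"
      then have "has231 (stack_run T (a # inp) (tl st))"
        apply (intro "2.IH"(2)[OF False])
        using "2.prems" st av' TT by auto
      then have "has231 (stack_run T (a # inp) st')" using st by simp
      moreover have "subseq (stack_run T (a # inp) st') (b # stack_run T (a # inp) st')"
        by (rule list_emb_Cons) (rule subseq_order.order_refl)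
      ultimately show ?thesis using out has231_mono by metis
    next
      assume mb: "m = b"
      have dist: "distinct (a # b # st' @ inp)" using "2.prems"(1) st by auto
      have bmin: "\<forall>z\<in>set (a # st'). b < z" using "2.prems"(4) dist mb st
        by (metis distinct.simps(2) insert_iff le_neq_implies_less list.set(2) Un_iff set_append)
      have srt: "sorted_wrt (>) st'"
        using av_min[of st' b] "2.prems"(2) st av' dist bmin TT by auto
      have len: "length st' \<le> 2"
      proof (rule ccontr)
        assume "\<not> length st' \<le> 2"
        then have "Suc (Suc (Suc 0)) \<le> length st'" by simp
        then obtain q r s rest where "st' = q # r # s # rest"
          by (auto simp: Suc_le_length_iff)
        then have "subseq [q,r,s] st'" "q > r" "r > s" using srt by auto
        moreover have "avoids_all TT st'" using av' TT by simp
        ultimately show False using avTT[of st'] by blast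
      qed
      have na': "\<not> avoids_all TT (a # b # st')" using na TT by simp
      from na' obtain p q r where pqr: "subseq [p,q,r] (a # b # st')"
          "(p<q \<and> q<r) \<or> (p>q \<and> q>r)" using avTT[of "a # b # st'"] by blast
      have "\<exists>q r. st' = [q,r] \<and> a > q \<and> q > r"
      proof -
        have c1: "\<not> subseq [p,q,r] st'" using len by (simp add: not_subseq_length)
        have avb: "avoids_all TT (b # st')" using "2.prems"(2) st TT by simp
        have c2: "\<not> subseq [p,q,r] (b # st')" using avb pqr(2) avTT[of "b # st'"] by blast
        have "p = a" "subseq [q,r] (b # st')" using pqr(1) c2 by (auto simp: subseq_Cons_right)
        have "q \<noteq> b"
        proof
          assume "q = b"
          then have "subseq [r] st'" using \<open>subseq [q,r] (b # st')\<close> dist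
            by (auto simp: subseq_Cons_right dest: subseq_Cons')
          then have "b < r" using bmin by (simp add: subseq_singleton_left)
          moreover have "a > b" using bmin by simp
          ultimately show False using pqr(2) \<open>p = a\<close> \<open>q = b\<close> by auto
        qed
        then have qr: "subseq [q,r] st'" using \<open>subseq [q,r] (b # st')\<close> by (auto simp: subseq_Cons_right)
        then have "q > r" using srt unfolding sorted_wrt_subseq2 by blast
        have "length st' = 2" using len list_emb_length[OF qr] by simp
        then have "st' = [q,r]" using subseq_same_length[OF qr] by simp
        then show ?thesis using pqr(2) \<open>p = a\<close> \<open>q > r\<close> by auto
      qed
      then obtain q r where qr: "st' = [q,r]" "a > q" "q > r" by blast
      have "subseq [a,q,r] [a,q,r]" by (rule subseq_order.refl)
      then have "\<not> avoids_all T [a,q,r]" using qr avTT[of "[a,q,r]"] TT by blast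
      then have "stack_run T (a # inp) [q,r] = q # stack_run T (a # inp) [r]" by (simp add: sr_pop)
      also have "stack_run T (a # inp) [r] = stack_run T inp [a,r]"
        using short_avoids[of "[a,r]"] TT by (simp add: sr_push)
      finally have e: "stack_run T (a # inp) st = b # q # stack_run T inp [a,r]"
        using out qr by simp
      have s1: "subseq [a,r] (stack_run T inp [a,r])" by (rule subseq_stack_run)
      have "subseq [q,a,r] (q # stack_run T inp [a,r])" using s1 by (rule subseq_Cons2)
      then have "subseq [q,a,r] (b # q # stack_run T inp [a,r])" by (rule list_emb_Cons)
      then have "subseq [q,a,r] (stack_run T (a # inp) st)" using e by simp
      then show ?thesis unfolding has231_def using qr by blast
    qed
  qed
qed



lemma subseq_mid:
  "subseq xs (A @ c # B) \<longleftrightarrow> subseq xs (A @ B) \<or>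
     (\<exists>xs1 xs2. xs = xs1 @ c # xs2 \<and> subseq xs1 A \<and> subseq xs2 B)"
proof
  assume "subseq xs (A @ c # B)"
  then obtain xs1 xs2 where x: "xs = xs1 @ xs2" "subseq xs1 A" "subseq xs2 (c # B)"
    by (auto simp: subseq_append_iff)
  from x(3) have "subseq xs2 B \<or> (\<exists>xs'. xs2 = c # xs' \<and> subseq xs' B)"
    by (simp add: subseq_Cons_right)
  then show "subseq xs (A @ B) \<or> (\<exists>xs1 xs2. xs = xs1 @ c # xs2 \<and> subseq xs1 A \<and> subseq xs2 B)"
    using x by (auto intro: list_emb_append_mono)
next
  have sub: "subseq (A @ B) (A @ c # B)" by (simp add: subseq_append' subseq_Cons_self)
  assume "subseq xs (A @ B) \<or> (\<exists>xs1 xs2. xs = xs1 @ c # xs2 \<and> subseq xs1 A \<and> subseq xs2 B)"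
  then show "subseq xs (A @ c # B)"
    using sub by (auto intro: list_emb_append_mono subseq_order.order_trans)
qed

lemma avW_cons:
  assumes "sorted_wrt (<) st" "distinct (a # st)"
  shows "avoids_all {[2,1]} (a # st) \<longleftrightarrow> (st = [] \<or> a < hd st)"
proof -
  have "(\<exists>x y. subseq [x,y] (a # st) \<and> x > y) \<longleftrightarrow> (\<exists>y\<in>set st. a > y)"
  proof
    assume "\<exists>x y. subseq [x,y] (a # st) \<and> x > y"
    then obtain x y where xy: "subseq [x,y] (a # st)" "x > y" by blast
    show "\<exists>y\<in>set st. a > y"
    proof (cases "subseq [x,y] st")
      case True
      then have "x < y" using assms(1) unfolding sorted_wrt_subseq2 by blast
      then show ?thesis using xy by simp
    next
      case False
      then have "x = a" "subseq [y] st" using xy(1) by (auto simp: subseq_Cons_right)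
      then show ?thesis using xy(2) by (auto simp: subseq_singleton_left)
    qed
  next
    assume "\<exists>y\<in>set st. a > y"
    then obtain y where "y \<in> set st" "a > y" by blast
    then have "subseq [a,y] (a # st)" by (simp add: subseq_singleton_left)
    then show "\<exists>x y. subseq [x,y] (a # st) \<and> x > y" using \<open>a > y\<close> by blast
  qed
  then have "avoids_all {[2,1]} (a # st) \<longleftrightarrow> (\<forall>y\<in>set st. \<not> a > y)"
    unfolding avW by blast
  also have "\<dots> \<longleftrightarrow> (\<forall>y\<in>set st. a < y)"
  proof -
    have ne: "\<forall>y\<in>set st. y \<noteq> a" using assms(2) by auto
    then have "\<forall>y\<in>set st. (\<not> a > y) = (a < y)" by auto
    then show ?thesis by blast
  qed
  also have "\<dots> \<longleftrightarrow> (st = [] \<or> a < hd st)" using assms(1) by (cases st) auto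
  finally show ?thesis .
qed

lemma no231_dec: "sorted_wrt (>) w \<Longrightarrow> \<not> has231 w"
  unfolding has231_def using sorted_wrt_subseq by fastforce

lemma knuth:
  "distinct (inp @ st) \<Longrightarrow> sorted_wrt (<) st \<Longrightarrow> T = {[2,1]} \<Longrightarrow>
   sorted_wrt (<) (stack_run T inp st) \<longleftrightarrow> \<not> has231 (rev st @ inp)"
proof (induction T inp st rule: stack_run.induct)
  case (1 T st)
  then show ?case using no231_dec[of "rev st"] by (simp add: sorted_wrt_rev)
next
  case (2 T a inp st)
  have W: "T = {[2,1]}" using "2.prems" by simp
  have avc: "avoids_all T (a # st) \<longleftrightarrow> (st = [] \<or> a < hd st)"
    using avW_cons[of st a] "2.prems" W by auto
  show ?case
  proof (cases "avoids_all T (a # st) \<or> st = []")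
    case True
    then have "st = [] \<or> a < hd st" using avc by auto
    then have "sorted_wrt (<) (a # st)" using "2.prems"(2)
      by (cases st) auto
    then show ?thesis using "2.IH"(1)[OF True] "2.prems" True by (simp add: sr_push)
  next
    case False
    then obtain b st' where st: "st = b # st'" by (cases st) auto
    have ab: "b < a" using False avc st "2.prems"(1) by auto
    have dist: "distinct (a # b # st' @ inp)" using "2.prems"(1) st by auto
    have bst: "\<forall>z\<in>set st'. b < z" "sorted_wrt (<) st'" using "2.prems"(2) st by auto
    have out: "stack_run T (a # inp) st = b # stack_run T (a # inp) st'"
      using False st sr_pop[of T a b st' inp] by simp
    have IH: "sorted_wrt (<) (stack_run T (a # inp) st') \<longleftrightarrow> \<not> has231 (rev st' @ a # inp)"
      using "2.IH"(2)[OF False] "2.prems" st by simp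
    have setr: "set (stack_run T (a # inp) st') = set (a # inp) \<union> set st'"
      by (simp add: set_stack_run)
    have key: "has231 (rev st' @ b # a # inp) \<longleftrightarrow>
       has231 (rev st' @ a # inp) \<or> (\<exists>z\<in>set inp. z < b)"
    proof
      assume "has231 (rev st' @ b # a # inp)"
      then obtain p q r where pqr: "subseq [p,q,r] (rev st' @ b # a # inp)" "r<p" "p<q"
        unfolding has231_def by blast
      from subseq_mid[THEN iffD1, OF pqr(1)] show "has231 (rev st' @ a # inp) \<or> (\<exists>z\<in>set inp. z < b)"
      proof
        assume "subseq [p,q,r] (rev st' @ a # inp)"
        then show ?thesis using pqr unfolding has231_def by blast
      next
        assume "\<exists>xs1 xs2. [p,q,r] = xs1 @ b # xs2 \<and> subseq xs1 (rev st') \<and> subseq xs2 (a # inp)"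
        then obtain xs1 xs2 where x: "[p,q,r] = xs1 @ b # xs2" "subseq xs1 (rev st')" "subseq xs2 (a # inp)"
          by blast
        have rs: "sorted_wrt (>) (rev st')" using bst(2) by (simp add: sorted_wrt_rev)
        consider "xs1 = []" "p = b" "xs2 = [q,r]" | "xs1 = [p]" "q = b" | "xs1 = [p,q]" "r = b"
          using x(1) by (cases xs1; cases "tl xs1"; auto simp: Cons_eq_append_conv)
        then show ?thesis
        proof cases
          case 1
          then have "r \<in> set (a # inp)" using x(3) subseq_set[of "[q,r]" "a # inp"] by auto
          then show ?thesis using 1 pqr ab by auto
        next
          case 2
          then have "p \<in> set st'" using x(2) by (simp add: subseq_singleton_left)
          then show ?thesis using 2 pqr bst by auto
        next
          case 3
          then show ?thesis using x(2) rs pqr unfolding sorted_wrt_subseq2 by force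
        qed
      qed
    next
      assume "has231 (rev st' @ a # inp) \<or> (\<exists>z\<in>set inp. z < b)"
      then show "has231 (rev st' @ b # a # inp)"
      proof
        assume "has231 (rev st' @ a # inp)"
        moreover have "subseq (rev st' @ a # inp) (rev st' @ b # a # inp)"
          by (simp add: subseq_append' subseq_Cons_self)
        ultimately show ?thesis using has231_mono by blast
      next
        assume "\<exists>z\<in>set inp. z < b"
        then obtain z where z: "z \<in> set inp" "z < b" by blast
        have "subseq [b,a,z] (b # a # inp)" using z(1) by (simp add: subseq_singleton_left)
        then have "subseq [b,a,z] (rev st' @ b # a # inp)" by (rule subseq_drop_many)
        then show ?thesis unfolding has231_def using z ab by blast
      qed
    qed
    have "sorted_wrt (<) (stack_run T (a # inp) st) \<longleftrightarrow>
        (\<forall>z\<in>set inp. b < z) \<and> \<not> has231 (rev st' @ a # inp)"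
      using out IH setr ab bst by auto
    also have "\<dots> \<longleftrightarrow> \<not> has231 (rev st @ a # inp)"
      using key st dist by force
    finally show ?thesis .
  qed
qed

lemma west_iff:
  assumes "distinct w" "set w = {1..n}"
  shows "west_s w = [1..<n+1] \<longleftrightarrow> \<not> has231 w"
proof -
  let ?o = "stack_run {[2,1]} w []"
  have o: "west_s w = ?o" by (simp add: west_s_def s_T_def)
  have k: "sorted_wrt (<) ?o \<longleftrightarrow> \<not> has231 w" using knuth[of w "[]"] assms by simp
  have so: "set ?o = {1..n}" using assms by (simp add: set_stack_run)
  have lo: "length ?o = length w" by (simp add: length_stack_run)
  have "card (set w) = length w" using assms(1) by (simp add: distinct_card)
  then have dO: "distinct ?o" using so lo assms(2) by (simp add: card_distinct)
  have "sorted_wrt (<) ?o \<longleftrightarrow> ?o = [1..<n+1]"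
  proof
    assume "sorted_wrt (<) ?o"
    then have s1: "sorted ?o" "distinct ?o" using strict_sorted_iff by blast+
    have s2: "set [1..<n+1] = {1..n}" by auto
    have "set ?o = set [1..<n+1]" using so s2 by simp
    then show "?o = [1..<n+1]"
      using sorted_distinct_set_unique[OF s1 sorted_upt distinct_upt] by blast
  next
    assume "?o = [1..<n+1]"
    then show "sorted_wrt (<) ?o" by (simp only: sorted_wrt_upt)
  qed
  then show ?thesis using o k by simp
qed

lemma pre_min:
  assumes "\<not> has231 (A @ m # C)" "\<forall>z\<in>set A. m < z" "distinct A"
  shows "sorted_wrt (>) A"
  unfolding sorted_wrt_subseq2
proof (intro allI impI)
  fix u v assume uv: "subseq [u,v] A"
  then have "u \<noteq> v" using distinct_subseq assms(3) by fastforce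
  have "u \<in> set A" using uv using subseq_set by fastforce
  have "subseq [u,v,m] (A @ m # C)"
    using list_emb_append_mono[OF uv, of "[m]" "m # C"] by simp
  then show "u > v" using assms(1,2) \<open>u \<in> set A\<close> \<open>u \<noteq> v\<close> unfolding has231_def
    by (meson linorder_neqE_nat)
qed

lemma post_min:
  assumes "avoids_all TT (A @ m # B)" "\<forall>z\<in>set B. m < z" "distinct B"
  shows "sorted_wrt (>) B"
  unfolding sorted_wrt_subseq2
proof (intro allI impI)
  fix u v assume uv: "subseq [u,v] B"
  then have "u \<noteq> v" using distinct_subseq assms(3) by fastforce
  have "u \<in> set B" using uv using subseq_set by fastforce
  have "subseq [m,u,v] (m # B)" using uv by simp
  then have "subseq [m,u,v] (A @ m # B)" by (rule subseq_drop_many)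
  then show "u > v" using assms(1,2) \<open>u \<in> set B\<close> \<open>u \<noteq> v\<close> unfolding avTT
    by (meson linorder_neqE_nat)
qed

lemma has231_Suc: "has231 (map Suc w) \<longleftrightarrow> has231 w"
proof
  assume "has231 (map Suc w)"
  then obtain p q r where pqr: "subseq [p,q,r] (map Suc w)" "r<p" "p<q" unfolding has231_def by blast
  from subseq_map_inj[OF inj_Suc pqr(1)] obtain zs where zs: "[p,q,r] = map Suc zs \<and> subseq zs w" ..
  then have "[p,q,r] = map Suc zs" "subseq zs w" by blast+
  moreover from this(1) obtain p' q' r' where "zs = [p',q',r']" "p = Suc p'" "q = Suc q'" "r = Suc r'"
    by (auto simp: Cons_eq_map_conv)
  ultimately show "has231 w" using pqr unfolding has231_def by auto
next
  assume "has231 w"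
  then obtain p q r where pqr: "subseq [p,q,r] w" "r<p" "p<q" unfolding has231_def by blast
  have "subseq (map Suc [p,q,r]) (map Suc w)" using pqr(1) by (rule subseq_map)
  then show "has231 (map Suc w)" using pqr unfolding has231_def by auto
qed



lemma key_dec:
  assumes run: "run TT x [] = (P, S)" and S: "S = S1 @ S2"
    and cond: "\<forall>A l. S1 = A @ [l] \<longrightarrow> \<not> sorted_wrt (>) (l # S2)"
    and dist: "distinct x" and m: "m \<in> set x" "\<forall>z\<in>set x. m \<le> z"
    and no: "\<not> has231 (P @ S1 @ S2)"
  shows "sorted_wrt (>) (P @ S1)"
proof -
  have y: "stack_run TT x [] = P @ S1 @ S2" using stack_run_run[of TT x "[]"] run S by simp
  have sety: "set (P @ S1 @ S2) = set x" using y set_stack_run[of TT x "[]"] by simp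
  have "length (P @ S1 @ S2) = length x" using y length_stack_run[of TT x "[]"] by simp
  then have disty: "distinct (P @ S1 @ S2)" using sety dist
    by (metis card_distinct distinct_card)
  have avS: "avoids_all TT S" using run_inv[of TT "[]" x] run short_avoids[of "[]"] by simp
  have mmin: "\<forall>z\<in>set (P @ S1 @ S2). m \<le> z" using sety m by simp
  have "m \<in> set P \<or> m \<in> set S1 \<or> m \<in> set S2" using sety m by auto
  moreover have "m \<notin> set P"
  proof
    assume "m \<in> set P"
    then have "has231 (stack_run TT x [])"
      using popped_min[of x "[]" TT m] dist run m short_avoids[of "[]"] by simp
    then show False using y no by simp
  qed
  moreover {
    assume "m \<in> set S2"
    then obtain S2a S2b where "S2 = S2a @ m # S2b" by (meson split_list)
    then have e: "P @ S1 @ S2 = (P @ S1 @ S2a) @ m # S2b" by simp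
    have "sorted_wrt (>) (P @ S1 @ S2a)"
      apply (rule pre_min[of _ m S2b])
      using no e disty mmin by (auto simp: order.order_iff_strict)
    then have ?thesis by (simp add: sorted_wrt_append)
  }
  moreover {
    assume "m \<in> set S1"
    then obtain A B where AB: "S1 = A @ m # B" by (meson split_list)
    have "B = []"
    proof (rule ccontr)
      assume "B \<noteq> []"
      then obtain B' l where B: "B = B' @ [l]" by (metis rev_exhaust)
      have "sorted_wrt (>) (B' @ l # S2)"
        apply (rule post_min[of A m])
        using avS S AB B disty mmin by (auto simp: order.order_iff_strict)
      then have "sorted_wrt (>) (l # S2)" by (simp add: sorted_wrt_append)
      then show False using cond AB B by (metis append.assoc append_Cons)
    qed
    then have e: "P @ S1 @ S2 = (P @ A) @ m # S2" using AB by simp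
    have "sorted_wrt (>) (P @ A)"
      apply (rule pre_min[of _ m S2])
      using no e disty mmin by (auto simp: order.order_iff_strict)
    moreover have "\<forall>z\<in>set (P @ A). m < z" using disty mmin e
      by (auto simp: order.order_iff_strict)
    ultimately have ?thesis using AB \<open>B = []\<close> by (auto simp: sorted_wrt_append)
  }
  ultimately show ?thesis by blast
qed

theorem proposition4p7:
  fixes n :: nat and x :: "nat list"
  assumes "n \<ge> 5" and "x \<in> perms n"
  shows "x \<in> Sort2 n [1,2,3] [3,2,1] \<longleftrightarrow> inc x \<in> Sort2 (n+1) [1,2,3] [3,2,1]"
proof -
  have dist: "distinct x" and setx: "set x = {1..n}" using assms(2) by (auto simp: perms_def)
  have one: "1 \<in> set x" "\<forall>z\<in>set x. 1 \<le> z" using setx assms(1) by auto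
  have incp: "inc x \<in> perms (n+1)"
  proof -
    have "distinct (inc x)" using dist setx by (auto simp: inc_def distinct_map)
    moreover have "set (inc x) = {1..n+1}"
    proof -
      have "set (inc x) = Suc ` {1..n} \<union> {1}" using setx by (auto simp: inc_def)
      also have "\<dots> = {1..n+1}" by (auto simp: image_iff)
      finally show ?thesis .
    qed
    ultimately show ?thesis by (simp add: perms_def)
  qed
  have sort2: "Sort2 k [1,2,3] [3,2,1] = {w \<in> perms k. west_s (s_T TT w) = [1..<k+1]}" for k
    by (simp add: Sort2_def TT_def)
  obtain P S where run: "run TT x [] = (P, S)" by (cases "run TT x []")
  have y: "s_T TT x = P @ S" using stack_run_run[of TT x "[]"] run by (simp add: s_T_def)
  have sety: "set (P @ S) = set x" using y set_stack_run[of TT x "[]"] by (simp add: s_T_def)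
  have "length (P @ S) = length x" using y length_stack_run[of TT x "[]"] by (simp add: s_T_def)
  then have disty: "distinct (P @ S)" using sety dist by (metis card_distinct distinct_card)
  have avS: "avoids_all TT S" using run_inv[of TT "[]" x] run short_avoids[of "[]"] by simp
  have pos: "\<forall>z\<in>set S. 0 < z"
  proof
    fix z assume "z \<in> set S"
    then have "z \<in> set (P @ S)" by simp
    then have "z \<in> {1..n}" unfolding sety setx .
    then show "0 < z" by simp
  qed
  have rs: "run TT (map Suc x) [] = (map Suc P, map Suc S)"
    using run_shift[of TT x "[]"] run by simp
  have y1: "s_T TT (inc x) = map Suc P @ stack_run TT [1] (map Suc S)"
    using run_split[of TT "map Suc x" "[1]" "[]"] rs by (simp add: s_T_def inc_def)
  have fp: "\<exists>S1' S2'. map Suc S = S1' @ S2' \<and> stack_run TT [1] (map Suc S) = S1' @ 1 # S2' \<and>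
     sorted_wrt (>) S2' \<and> (\<forall>A l. S1' = A @ [l] \<longrightarrow> \<not> sorted_wrt (>) (l # S2'))"
    by (rule final_phase) (use avS disty pos in \<open>auto simp: avoids_Suc distinct_map\<close>)
  then obtain S1' S2' where F: "map Suc S = S1' @ S2'" "stack_run TT [1] (map Suc S) = S1' @ 1 # S2'"
     "sorted_wrt (>) S2'" "\<forall>A l. S1' = A @ [l] \<longrightarrow> \<not> sorted_wrt (>) (l # S2')"
    by blast
  obtain S1 S2 where S12: "S = S1 @ S2" "S1' = map Suc S1" "S2' = map Suc S2"
    using F(1) by (auto simp: map_eq_append_conv)
  have cond: "\<forall>A l. S1 = A @ [l] \<longrightarrow> \<not> sorted_wrt (>) (l # S2)"
  proof (intro allI impI)
    fix A l assume "S1 = A @ [l]"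
    then have "\<not> sorted_wrt (>) (Suc l # map Suc S2)" using F(4) S12 by auto
    then show "\<not> sorted_wrt (>) (l # S2)" by (simp add: sorted_wrt_map)
  qed
  have y1': "s_T TT (inc x) = map Suc (P @ S1) @ 1 # map Suc S2"
    using y1 F(2) S12 by simp
  have yy: "s_T TT x = P @ S1 @ S2" using y S12 by simp
  have disty1: "distinct (s_T TT (inc x))" and sety1: "set (s_T TT (inc x)) = {1..n+1}"
  proof -
    have e1: "set (s_T TT (inc x)) = set (inc x)" by (simp add: s_T_def set_stack_run)
    have e2: "length (s_T TT (inc x)) = length (inc x)" by (simp add: s_T_def length_stack_run)
    have di: "distinct (inc x)" "set (inc x) = {1..n+1}" using incp unfolding perms_def by auto
    have "card (set (s_T TT (inc x))) = length (s_T TT (inc x))"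
      using e1 e2 distinct_card[OF di(1)] by simp
    then show "distinct (s_T TT (inc x))" by (rule card_distinct)
    show "set (s_T TT (inc x)) = {1..n+1}" using e1 di(2) by simp
  qed
  have lhs: "x \<in> Sort2 n [1,2,3] [3,2,1] \<longleftrightarrow> \<not> has231 (P @ S1 @ S2)"
    using west_iff[of "s_T TT x" n] disty sety setx yy S12 assms(2) sort2 by auto
  have rhs: "inc x \<in> Sort2 (n+1) [1,2,3] [3,2,1] \<longleftrightarrow> \<not> has231 (map Suc (P @ S1) @ 1 # map Suc S2)"
    using west_iff[of "s_T TT (inc x)" "n+1"] disty1 sety1 y1' incp sort2 by auto
  have "\<not> has231 (P @ S1 @ S2) \<longleftrightarrow> \<not> has231 (map Suc (P @ S1) @ 1 # map Suc S2)"
  proof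
    assume no: "\<not> has231 (P @ S1 @ S2)"
    have D: "sorted_wrt (>) (P @ S1)"
      using key_dec[OF run S12(1) cond dist one no] .
    show "\<not> has231 (map Suc (P @ S1) @ 1 # map Suc S2)"
    proof
      assume "has231 (map Suc (P @ S1) @ 1 # map Suc S2)"
      then obtain p q r where pqr: "subseq [p,q,r] (map Suc (P @ S1) @ 1 # map Suc S2)" "r<p" "p<q"
        unfolding has231_def by blast
      from pqr(1)[unfolded subseq_mid] show False
      proof
        assume "subseq [p,q,r] (map Suc (P @ S1) @ map Suc S2)"
        then have "has231 (map Suc (P @ S1 @ S2))" using pqr unfolding has231_def by auto
        then show False using no has231_Suc by blast
      next
        assume "\<exists>xs1 xs2. [p,q,r] = xs1 @ 1 # xs2 \<and> subseq xs1 (map Suc (P @ S1)) \<and> subseq xs2 (map Suc S2)"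
        then obtain xs1 xs2 where x: "[p,q,r] = xs1 @ 1 # xs2" "subseq xs1 (map Suc (P @ S1))"
           "subseq xs2 (map Suc S2)" by blast
        consider "xs1 = []" "p = 1" | "xs1 = [p]" "q = 1" | "xs1 = [p,q]" "r = 1"
          using x(1) by (cases xs1; cases "tl xs1"; auto simp: Cons_eq_append_conv)
        then show False
        proof cases
          case 1
          then have "xs2 = [q,r]" using x(1) by simp
          then have "r \<in> set (map Suc S2)" using x(3) subseq_set[of "[q,r]" "map Suc S2"] by simp
          then show ?thesis using pqr 1 by auto
        next
          case 2
          then have "p \<in> set (map Suc (P @ S1))" using x(2) by (simp add: subseq_singleton_left)
          then show ?thesis using 2 pqr by auto
        next
          case 3
          have "sorted_wrt (>) (map Suc (P @ S1))" unfolding sorted_wrt_map using D by simp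
          then show ?thesis using x(2) 3 pqr unfolding sorted_wrt_subseq2 by force
        qed
      qed
    qed
  next
    assume no: "\<not> has231 (map Suc (P @ S1) @ 1 # map Suc S2)"
    have "subseq (map Suc (P @ S1) @ map Suc S2) (map Suc (P @ S1) @ 1 # map Suc S2)"
      by (simp add: subseq_append' subseq_Cons_self)
    then show "\<not> has231 (P @ S1 @ S2)"
      using no has231_mono has231_Suc[of "P @ S1 @ S2"] by auto
  qed
  then show ?thesis using lhs rhs by simp
qed


end
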